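(* Run the UCB-like policy described in the context and let $\theta^*=(\log v_i^* )_{i\in\mathcal N}$. For $i\in\mathcal N$ and $\ell\in\{1,\dots,q\}$ define the event $$\mathcal A_{i,\ell}=\Big\{\Big|\frac{\partial\mathcal L_{\ell-1}}{\partial\theta_i}\Big|_{\theta=\theta^*}\Big|\le\sqrt{2n_i^{\ell-1}\Big(1+2\log\frac{2\sqrt T qN}{\delta}\Big)}\Big\},$$ $\mathcal A_\ell=\bigcap_{i=1}^N\mathcal A_{i,\ell}$ and $\mathcal A=\bigcap_{i=1}^N\bigcap_{\ell=1}^q\mathcal A_{i,\ell}$. Then $\mathbb P(\mathcal A_{i,\ell})\ge 1-\delta/(2qN)$ for each $i,\ell$; $\mathbb P(\mathcal A_\ell)\ge1-\delta/(2q)$ for each $\ell$; and $\mathbb P(\mathcal A)\ge 1-\delta/2$.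
   Context: Setting: $N$ products $\mathcal N=\{1,\dots,N\}$, a no-purchase option $0$, $K$ resources $\mathcal K=\{1,\dots,K\}$, horizon of $T$ periods. Product $i$ gives revenue $r(i)\in[0,1]$ and consumes $a(i,k)\in[0,1]$ units of resource $k$; $r(0)=a(0,k)=0$. Resource $k$ has initial inventory $Tc(k)$, $c(k)>0$. For $v\in\mathbb R_{>0}^N$ and $S\subseteq\mathcal N$ the MNL probabilities are $\varphi(i,S\mid v)=v_i/(1+\sum_{j\in S}v_j)$ for $i\in S$, $\varphi(0,S\mid v)=1/(1+\sum_{j\in S}v_j)$, $\varphi(i,S\mid v)=0$ for $i\in\mathcal N\setminus S$. The unknown true vector $v^*$ satisfies $v_i^*\in[1/R,R]$. In period $t$ the retailer offers $S_t\subseteq\mathcal N$ and the customer chooses $I_t\in S_t\cup\{0\}$ with conditional probability $\varphi(I_t,S_t\mid v^* )$ given the past. UCB-like policy: parameters $\tau$ (a multiple of $N$), switch budget $L$, $\delta\in(0,1)$, $q=q(L,K)=\lfloor (L-N)/(K+1)\rfloor\ge1$; $\Psi=\frac{R(1+NR)^2}{2}\sqrt{2+4\log\frac{2T^{1/2}q(K+1)N}{\delta}}$, $\varepsilon(n)=(\sqrt N+1)\Psi/\sqrt n$, $\omega=\frac{1}{T\min_k c(k)}\Big(4(\sqrt N+1)\sqrt{1+\frac{NT}{\tau q}}\Psi\sqrt{N^2T}+\sqrt{2T\log\frac{4(K+1)}{\delta}}+\frac{2N^2\Psi}{\sqrt\tau}\sqrt{2T\log\frac{4(K+1)}{\delta}}+\tau\Big)$.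 Warm start: for $i=1,\dots,N$ offer $S_t=\{i\}$ for $t=(i-1)\tau/N+1,\dots,i\tau/N$. Let $T_0=\tau$, $T_\ell=\ell\lfloor (T-\tau)/q\rfloor+\tau$ for $\ell=1,\dots,q$. In epoch $\ell$: let $n_i^{\ell-1}=\sum_{t=1}^{T_{\ell-1}}\mathbb I(i\in S_t)$; compute the MLE $\hat v^\ell=e^{\hat\theta}$, $\hat\theta$ minimizing the negative log-likelihood $\mathcal L_{\ell-1}(\theta)=-\sum_{t=1}^{T_{\ell-1}}\big[\theta_{I_t}-\log(1+\sum_{i\in S_t}e^{\theta_i})\big]$ ($\theta_0:=0$); solve the UCB-LP: maximize $\sum_{S}\sum_{i\in S}r(i)\big(\varphi(i,S\mid\hat v^\ell)+\varepsilon(n_i^{\ell-1})\big)y(S)$ subject to $\sum_{S}\sum_{i\in S}a(i,k)\big(\varphi(i,S\mid\hat v^\ell)-\varepsilon(n_i^{\ell-1})\big)y(S)\le(1-\omega)c(k)$ for all $k$, $\sum_S y(S)=1$, $y\ge0$, obtaining an optimal $y_\ell$; draw an assortment independently from $y_\ell$ for each period $T_{\ell-1}+1,\dots,T_\ell$, let $N_\ell(S)$ be the number of draws equal to $S$, and offer each $S$ with $N_\ell(S)>0$ for $N_\ell(S)$ consecutive periods; stop once a resource is exhausted. *)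

theory Defs
  imports "HOL-Probability.Probability"
begin

text \<open>Products are 1..N, the no-purchase option is 0. An assortment is a set of
products; a history is the list of (offered assortment, chosen option) pairs,
period t (1-based) being entry t-1.\<close>

type_synonym history = "(nat set \<times> nat) list"

definition mnl_prob :: "(nat \<Rightarrow> real) \<Rightarrow> nat set \<Rightarrow> nat \<Rightarrow> real" where
  "mnl_prob v S i =
     (if i = 0 then 1 / (1 + (\<Sum>j\<in>S. v j))
      else if i \<in> S then v i / (1 + (\<Sum>j\<in>S. v j)) else 0)"

text \<open>MNL choice distribution (a genuine pmf when S is a finite set of products and v > 0).\<close>
definition mnl_pmf :: "(nat \<Rightarrow> real) \<Rightarrow> nat set \<Rightarrow> nat pmf" where
  "mnl_pmf v S = embed_pmf (mnl_prob v S)"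

fun hist :: "(history \<Rightarrow> nat set pmf) \<Rightarrow> (nat \<Rightarrow> real) \<Rightarrow> nat \<Rightarrow> history pmf" where
  "hist pol v 0 = return_pmf []"
| "hist pol v (Suc t) =
     bind_pmf (hist pol v t) (\<lambda>h. bind_pmf (pol h) (\<lambda>S. bind_pmf (mnl_pmf v S)
        (\<lambda>I. return_pmf (h @ [(S, I)]))))"

definition neg_loglik :: "history \<Rightarrow> nat \<Rightarrow> (nat \<Rightarrow> real) \<Rightarrow> real" where
  "neg_loglik h m \<theta> =
     - (\<Sum>t<m. (if snd (h ! t) = 0 then 0 else \<theta> (snd (h ! t)))
               - ln (1 + (\<Sum>j\<in>fst (h ! t). exp (\<theta> j))))"

definition grad_i :: "history \<Rightarrow> nat \<Rightarrow> nat \<Rightarrow> (nat \<Rightarrow> real) \<Rightarrow> real" where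
  "grad_i h m i \<theta> = deriv (\<lambda>x. neg_loglik h m (\<theta>(i := x))) (\<theta> i)"

definition n_count :: "history \<Rightarrow> nat \<Rightarrow> nat \<Rightarrow> nat" where
  "n_count h m i = card {t. t < m \<and> i \<in> fst (h ! t)}"

definition epoch_end :: "nat \<Rightarrow> nat \<Rightarrow> nat \<Rightarrow> nat \<Rightarrow> nat" where
  "epoch_end T \<tau> q l = l * ((T - \<tau>) div q) + \<tau>"

definition event_A :: "nat \<Rightarrow> nat \<Rightarrow> nat \<Rightarrow> nat \<Rightarrow> real \<Rightarrow> (nat \<Rightarrow> real)
    \<Rightarrow> nat \<Rightarrow> nat \<Rightarrow> history set" where
  "event_A N T \<tau> q \<delta> v i l =
     {h. \<bar>grad_i h (epoch_end T \<tau> q (l - 1)) i (\<lambda>j. ln (v j))\<bar>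
         \<le> sqrt (2 * real (n_count h (epoch_end T \<tau> q (l - 1)) i)
                  * (1 + 2 * ln (2 * sqrt (real T) * real q * real N / \<delta>)))}"

end

theory Submission
  imports Defs "HOL-Probability.Hoeffding"
begin


definition okS :: "nat \<Rightarrow> nat set \<Rightarrow> bool" where
  "okS N S \<longleftrightarrow> S \<subseteq> {1..N}"

lemma mnl_valid:
  assumes hS: "S \<subseteq> {1..N}" and hv: "\<And>j. j \<in> S \<Longrightarrow> v j > 0"
  shows "\<forall>x. 0 \<le> mnl_prob v S x" "(\<integral>\<^sup>+x. ennreal (mnl_prob v S x) \<partial>count_space UNIV) = 1"
proof -
  have fin: "finite S" using hS finite_subset by blast
  have pos: "0 \<le> (\<Sum>j\<in>S. v j)" using hv by (intro sum_nonneg) (auto intro: less_imp_le)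
  show "\<forall>x. 0 \<le> mnl_prob v S x" using pos hv by (auto simp: mnl_prob_def intro!: divide_nonneg_pos less_imp_le)
  have z: "0 \<notin> S" using hS by auto
  have "(\<integral>\<^sup>+x. ennreal (mnl_prob v S x) \<partial>count_space UNIV) = (\<Sum>x\<in>insert 0 S. ennreal (mnl_prob v S x))"
    by (rule nn_integral_count_space') (auto simp: fin mnl_prob_def)
  also have "\<dots> = ennreal (\<Sum>x\<in>insert 0 S. mnl_prob v S x)"
    using pos hv by (intro sum_ennreal) (auto simp: mnl_prob_def intro!: divide_nonneg_pos less_imp_le)
  also have "(\<Sum>x\<in>insert 0 S. mnl_prob v S x) = 1 / (1 + (\<Sum>j\<in>S. v j)) + (\<Sum>x\<in>S. v x / (1 + (\<Sum>j\<in>S. v j)))"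
    using z fin by (simp add: mnl_prob_def) (intro sum.cong, auto)
  also have "\<dots> = 1" using pos by (simp add: sum_divide_distrib[symmetric] field_simps)
  finally show "(\<integral>\<^sup>+x. ennreal (mnl_prob v S x) \<partial>count_space UNIV) = 1" by simp
qed

lemma mnl_pmf_pmf:
  assumes hS: "S \<subseteq> {1..N}" and hv: "\<And>j. j \<in> S \<Longrightarrow> v j > 0"
  shows "pmf (mnl_pmf v S) x = mnl_prob v S x"
  unfolding mnl_pmf_def using mnl_valid[of S N v, OF hS hv] by (intro pmf_embed_pmf) auto

lemma mnl_pmf_set:
  assumes hS: "S \<subseteq> {1..N}" and hv: "\<And>j. j \<in> S \<Longrightarrow> v j > 0"
  shows "set_pmf (mnl_pmf v S) = {x. mnl_prob v S x \<noteq> 0}"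
  unfolding mnl_pmf_def using mnl_valid[of S N v, OF hS hv] by (intro set_embed_pmf) auto

lemma mnl_pmf_set_sub:
  assumes hS: "S \<subseteq> {1..N}" and hv: "\<And>j. j \<in> S \<Longrightarrow> v j > 0"
  shows "set_pmf (mnl_pmf v S) \<subseteq> insert 0 S"
  using mnl_pmf_set[of S N v, OF hS hv] by (auto simp: mnl_prob_def split: if_splits)

lemma mnl_sum:
  assumes hS: "S \<subseteq> {1..N}" and hv: "\<And>j. j \<in> S \<Longrightarrow> v j > 0"
  shows "(\<Sum>x\<in>insert 0 S. mnl_prob v S x) = 1"
proof -
  have fin: "finite S" using hS finite_subset by blast
  have pos: "0 \<le> (\<Sum>j\<in>S. v j)" using hv by (intro sum_nonneg) (auto intro: less_imp_le)
  have z: "0 \<notin> S" using hS by auto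
  have "(\<Sum>x\<in>insert 0 S. mnl_prob v S x) = 1 / (1 + (\<Sum>j\<in>S. v j)) + (\<Sum>x\<in>S. v x / (1 + (\<Sum>j\<in>S. v j)))"
    using z fin by (simp add: mnl_prob_def) (intro sum.cong, auto)
  also have "\<dots> = 1" using pos by (simp add: sum_divide_distrib[symmetric] field_simps)
  finally show ?thesis .
qed

lemma bern_bound:
  fixes p h :: real
  assumes "0 \<le> p" "p \<le> 1"
  shows "p * exp (h * (1 - p)) + (1 - p) * exp (- h * p) \<le> exp (h\<^sup>2 / 8)"
proof -
  have key: "q * exp (g * (1 - q)) + (1 - q) * exp (- g * q) \<le> exp (g\<^sup>2 / 8)"
    if q: "0 \<le> q" "q \<le> 1" and g: "0 \<le> g" for q g :: real
  proof -
    have pos: "1 + q * (exp g - 1) > 0"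
      using q g by (intro add_pos_nonneg mult_nonneg_nonneg) auto
    have L: "- g * q + ln (1 + q * (exp g - 1)) \<le> g\<^sup>2 / 8"
      using Hoeffdings_lemma_aux[OF g q(1)] by simp
    have "q * exp (g * (1 - q)) + (1 - q) * exp (- g * q) = exp (- g * q) * (1 + q * (exp g - 1))"
      by (simp add: algebra_simps exp_diff exp_minus field_simps)
    also have "\<dots> = exp (- g * q + ln (1 + q * (exp g - 1)))"
      using pos by (simp add: exp_add exp_diff exp_minus field_simps)
    also have "\<dots> \<le> exp (g\<^sup>2 / 8)" using L by simp
    finally show ?thesis .
  qed
  show ?thesis
  proof (cases "h \<ge> 0")
    case True then show ?thesis using key[OF assms] by simp
  next
    case False
    have "(1 - p) * exp ((- h) * (1 - (1 - p))) + (1 - (1 - p)) * exp (- (- h) * (1 - p)) \<le> exp ((- h)\<^sup>2 / 8)"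
      using False assms by (intro key) auto
    then show ?thesis by (simp add: algebra_simps)
  qed
qed

definition zf :: "(nat \<Rightarrow> real) \<Rightarrow> nat \<Rightarrow> nat set \<times> nat \<Rightarrow> real" where
  "zf v i x = (if snd x = i then 1 else 0) - mnl_prob v (fst x) i"

definition kf :: "nat \<Rightarrow> nat set \<times> nat \<Rightarrow> real" where
  "kf i x = (if i \<in> fst x then 1 else 0)"

lemma step_bound:
  assumes hS: "S \<subseteq> {1..N}" and hv: "\<And>j. j \<in> S \<Longrightarrow> v j > 0" and i: "i \<noteq> 0"
  shows "(\<integral>\<^sup>+I. ennreal (exp (lam * zf v i (S, I) - lam\<^sup>2 / 2 * kf i (S, I))) \<partial>mnl_pmf v S) \<le> 1"
proof -
  have fin: "finite (insert 0 S)" using hS finite_subset by blast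
  define p where "p = mnl_prob v S i"
  have "(\<integral>\<^sup>+I. ennreal (exp (lam * zf v i (S, I) - lam\<^sup>2 / 2 * kf i (S, I))) \<partial>mnl_pmf v S)
      = (\<Sum>x\<in>insert 0 S. ennreal (exp (lam * zf v i (S, x) - lam\<^sup>2 / 2 * kf i (S, x))) * pmf (mnl_pmf v S) x)"
    using mnl_pmf_set_sub[of S N v, OF hS hv] by (intro nn_integral_measure_pmf_support fin) auto
  also have "\<dots> = ennreal (\<Sum>x\<in>insert 0 S. exp (lam * zf v i (S, x) - lam\<^sup>2 / 2 * kf i (S, x)) * mnl_prob v S x)"
    using mnl_valid(1)[of S N v, OF hS hv] by (subst sum_ennreal[symmetric]) (auto intro!: sum.cong simp: mnl_pmf_pmf[of S N v, OF hS hv] ennreal_mult)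
  also have "(\<Sum>x\<in>insert 0 S. exp (lam * zf v i (S, x) - lam\<^sup>2 / 2 * kf i (S, x)) * mnl_prob v S x) \<le> 1"
  proof (cases "i \<in> S")
    case False
    then have "(\<Sum>x\<in>insert 0 S. exp (lam * zf v i (S, x) - lam\<^sup>2 / 2 * kf i (S, x)) * mnl_prob v S x)
        = (\<Sum>x\<in>insert 0 S. mnl_prob v S x)"
      using i by (intro sum.cong) (auto simp: zf_def kf_def mnl_prob_def)
    then show ?thesis using mnl_sum[of S N v, OF hS hv] by simp
  next
    case True
    have p01: "0 \<le> p" "p \<le> 1"
    proof -
      show "0 \<le> p" using mnl_valid(1)[of S N v, OF hS hv] by (simp add: p_def)
      have "(\<Sum>x\<in>insert 0 S. mnl_prob v S x) = p + (\<Sum>x\<in>insert 0 S - {i}. mnl_prob v S x)"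
        using True fin by (simp add: p_def sum.remove)
      moreover have "0 \<le> (\<Sum>x\<in>insert 0 S - {i}. mnl_prob v S x)"
        using mnl_valid(1)[of S N v, OF hS hv] by (intro sum_nonneg) auto
      ultimately show "p \<le> 1" using mnl_sum[of S N v, OF hS hv] by simp
    qed
    have rest: "(\<Sum>x\<in>insert 0 S - {i}. mnl_prob v S x) = 1 - p"
      using sum.remove[of "insert 0 S" i "mnl_prob v S"] True fin mnl_sum[of S N v, OF hS hv] by (simp add: p_def)
    have "(\<Sum>x\<in>insert 0 S. exp (lam * zf v i (S, x) - lam\<^sup>2 / 2 * kf i (S, x)) * mnl_prob v S x)
       = exp (lam * (1 - p) - lam\<^sup>2 / 2) * p
         + (\<Sum>x\<in>insert 0 S - {i}. exp (lam * (- p) - lam\<^sup>2 / 2) * mnl_prob v S x)"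
      using True fin sum.remove[of "insert 0 S" i "\<lambda>x. exp (lam * zf v i (S, x) - lam\<^sup>2 / 2 * kf i (S, x)) * mnl_prob v S x"]
      by (simp add: zf_def kf_def p_def)
    also have "\<dots> = exp (- lam\<^sup>2 / 2) * (p * exp (lam * (1 - p)) + (1 - p) * exp (- lam * p))"
    proof -
      have "(\<Sum>x\<in>insert 0 S - {i}. exp (lam * (- p) - lam\<^sup>2 / 2) * mnl_prob v S x) = exp (lam * (- p) - lam\<^sup>2 / 2) * (1 - p)"
        using rest by (simp add: sum_distrib_left[symmetric])
      moreover have "exp (lam * (1 - p) - lam\<^sup>2 / 2) = exp (- lam\<^sup>2 / 2) * exp (lam * (1 - p))"
        by (simp add: exp_add[symmetric])
      moreover have "exp (lam * (- p) - lam\<^sup>2 / 2) = exp (- lam\<^sup>2 / 2) * exp (- lam * p)"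
        by (simp add: exp_add[symmetric])
      ultimately show ?thesis by (simp add: algebra_simps)
    qed
    also have "\<dots> \<le> exp (- lam\<^sup>2 / 2) * exp (lam\<^sup>2 / 8)"
      by (intro mult_left_mono bern_bound p01) auto
    also have "\<dots> = exp (- (3 * lam\<^sup>2 / 8))" by (simp add: exp_add[symmetric])
    also have "\<dots> \<le> 1" by simp
    finally show ?thesis .
  qed
  then have "ennreal (\<Sum>x\<in>insert 0 S. exp (lam * zf v i (S, x) - lam\<^sup>2 / 2 * kf i (S, x)) * mnl_prob v S x) \<le> 1"
    by (simp add: ennreal_le_1)
  finally show ?thesis .
qed

definition Msum :: "(nat \<Rightarrow> real) \<Rightarrow> nat \<Rightarrow> nat \<Rightarrow> history \<Rightarrow> real" where
  "Msum v i m h = (\<Sum>s<min m (length h). zf v i (h ! s))"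

definition Ksum :: "nat \<Rightarrow> nat \<Rightarrow> history \<Rightarrow> real" where
  "Ksum i m h = (\<Sum>s<min m (length h). kf i (h ! s))"

definition Fexp :: "real \<Rightarrow> (nat \<Rightarrow> real) \<Rightarrow> nat \<Rightarrow> nat \<Rightarrow> history \<Rightarrow> real" where
  "Fexp lam v i m h = exp (lam * Msum v i m h - lam\<^sup>2 / 2 * Ksum i m h)"

lemma sum_snoc:
  "(\<Sum>s<min m (length (h @ [x])). f ((h @ [x]) ! s))
    = (\<Sum>s<min m (length h). f (h ! s)) + (if length h < m then f x else 0)"
proof (cases "length h < m")
  case True
  then have "min m (length (h @ [x])) = Suc (length h)" "min m (length h) = length h" by auto
  then show ?thesis using True by (simp add: nth_append)
next
  case False
  then have "min m (length (h @ [x])) = m" "min m (length h) = m" by auto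
  then show ?thesis using False by (auto simp: nth_append intro!: sum.cong)
qed

lemma Fexp_snoc:
  "Fexp lam v i m (h @ [x]) = Fexp lam v i m h *
     (if length h < m then exp (lam * zf v i x - lam\<^sup>2 / 2 * kf i x) else 1)"
  unfolding Fexp_def Msum_def Ksum_def sum_snoc
  by (auto simp: exp_add[symmetric] algebra_simps)

lemma Fexp_nonneg: "0 \<le> Fexp lam v i m h"
  by (simp add: Fexp_def)

lemma core:
  assumes pol: "\<And>h. set_pmf (pol h) \<subseteq> Pow {1..N}"
    and vpos: "\<And>j. j \<in> {1..N} \<Longrightarrow> v j > 0" and i: "i \<noteq> 0"
  shows "(\<integral>\<^sup>+h. ennreal (Fexp lam v i m h) \<partial>hist pol v t) \<le> 1"
proof (induction t)
  case 0
  then show ?case by (simp add: Fexp_def Msum_def Ksum_def)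
next
  case (Suc t)
  have inner: "(\<integral>\<^sup>+S. \<integral>\<^sup>+I. ennreal (if length h < m then exp (lam * zf v i (S, I) - lam\<^sup>2 / 2 * kf i (S, I)) else 1) \<partial>mnl_pmf v S \<partial>pol h) \<le> 1"
    for h
  proof -
    have "(\<integral>\<^sup>+S. \<integral>\<^sup>+I. ennreal (if length h < m then exp (lam * zf v i (S, I) - lam\<^sup>2 / 2 * kf i (S, I)) else 1) \<partial>mnl_pmf v S \<partial>pol h)
       \<le> (\<integral>\<^sup>+S. 1 \<partial>pol h)"
    proof (rule nn_integral_mono_AE, unfold AE_measure_pmf_iff, intro ballI)
      fix S assume "S \<in> set_pmf (pol h)"
      then have hS: "S \<subseteq> {1..N}" using pol by auto
      have hv: "\<And>j. j \<in> S \<Longrightarrow> v j > 0" using hS vpos by auto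
      show "(\<integral>\<^sup>+I. ennreal (if length h < m then exp (lam * zf v i (S, I) - lam\<^sup>2 / 2 * kf i (S, I)) else 1) \<partial>mnl_pmf v S) \<le> 1"
      proof (cases "length h < m")
        case True
        then show ?thesis using step_bound[of S N v i lam, OF hS hv i] by simp
      next
        case False
        then show ?thesis by (simp add: measure_pmf.emeasure_space_1)
      qed
    qed
    also have "\<dots> = 1" by (simp add: measure_pmf.emeasure_space_1)
    finally show ?thesis .
  qed
  have "(\<integral>\<^sup>+h. ennreal (Fexp lam v i m h) \<partial>hist pol v (Suc t))
     = (\<integral>\<^sup>+h. \<integral>\<^sup>+S. \<integral>\<^sup>+I. ennreal (Fexp lam v i m h) *
          ennreal (if length h < m then exp (lam * zf v i (S, I) - lam\<^sup>2 / 2 * kf i (S, I)) else 1) \<partial>mnl_pmf v S \<partial>pol h \<partial>hist pol v t)"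
    by (simp add: Fexp_snoc ennreal_mult Fexp_nonneg)
  also have "\<dots> = (\<integral>\<^sup>+h. ennreal (Fexp lam v i m h) * (\<integral>\<^sup>+S. \<integral>\<^sup>+I. 
          ennreal (if length h < m then exp (lam * zf v i (S, I) - lam\<^sup>2 / 2 * kf i (S, I)) else 1) \<partial>mnl_pmf v S \<partial>pol h) \<partial>hist pol v t)"
    by (simp add: nn_integral_cmult)
  also have "\<dots> \<le> (\<integral>\<^sup>+h. ennreal (Fexp lam v i m h) * 1 \<partial>hist pol v t)"
    by (intro nn_integral_mono mult_left_mono inner) auto
  also have "\<dots> \<le> 1" using Suc by simp
  finally show ?case .
qed

lemma markov_pmf:
  fixes M :: "'a pmf"
  assumes I: "(\<integral>\<^sup>+h. ennreal (f h) \<partial>M) \<le> 1" and nn: "\<And>h. 0 \<le> f h" and a: "a > 0"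
  shows "measure_pmf.prob M {h. a \<le> f h} \<le> 1 / a"
proof -
  have set: "{x \<in> UNIV. 1 \<le> ennreal (1 / a) * (\<lambda>h. ennreal (f h)) x} = {h. a \<le> f h}"
  proof -
    have "1 \<le> ennreal (1 / a) * ennreal (f x) \<longleftrightarrow> a \<le> f x" for x
    proof -
      have "ennreal (1 / a) * ennreal (f x) = ennreal (f x / a)"
        using a nn by (simp add: ennreal_mult[symmetric])
      moreover have "1 \<le> ennreal (f x / a) \<longleftrightarrow> 1 \<le> f x / a"
        by (rule ennreal_ge_1)
      moreover have "1 \<le> f x / a \<longleftrightarrow> a \<le> f x" using a by (simp add: le_divide_eq)
      ultimately show ?thesis by simp
    qed
    then show ?thesis by auto
  qed
  have "emeasure (measure_pmf M) {h. a \<le> f h} \<le> ennreal (1 / a) * (\<integral>\<^sup>+ x. ennreal (f x) * indicator UNIV x \<partial>M)"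
    using nn_integral_Markov_inequality[of "\<lambda>h. ennreal (f h)" UNIV "measure_pmf M" "ennreal (1 / a)"]
    unfolding set by simp
  also have "\<dots> \<le> ennreal (1 / a) * 1" using I by (intro mult_left_mono) auto
  finally have "emeasure (measure_pmf M) {h. a \<le> f h} \<le> ennreal (1 / a)" by simp
  then show ?thesis using a
    by (simp add: measure_pmf.emeasure_eq_measure)
qed

lemma hist_support:
  assumes pol: "\<And>h. set_pmf (pol h) \<subseteq> Pow {1..N}"
    and vpos: "\<And>j. j \<in> {1..N} \<Longrightarrow> v j > 0"
  shows "h \<in> set_pmf (hist pol v t) \<Longrightarrow> length h = t \<and>
     (\<forall>s<t. fst (h ! s) \<subseteq> {1..N} \<and> (snd (h ! s) = 0 \<or> snd (h ! s) \<in> fst (h ! s)))"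
proof (induction t arbitrary: h)
  case 0
  then show ?case by simp
next
  case (Suc t)
  from Suc.prems obtain h0 S I where h0: "h0 \<in> set_pmf (hist pol v t)" and S: "S \<in> set_pmf (pol h0)"
    and I: "I \<in> set_pmf (mnl_pmf v S)" and h: "h = h0 @ [(S, I)]"
    by auto
  have hS: "S \<subseteq> {1..N}" using S pol by auto
  have hv: "\<And>j. j \<in> S \<Longrightarrow> v j > 0" using hS vpos by auto
  have "I \<in> insert 0 S" using I mnl_pmf_set_sub[of S N v, OF hS hv] by auto
  then show ?case using Suc.IH[OF h0] h hS
    by (auto simp: nth_append less_Suc_eq)
qed

lemma nll_deriv:
  fixes \<theta> :: "nat \<Rightarrow> real"
  assumes fin: "\<And>t. t < m \<Longrightarrow> finite (fst (h ! t))" and i: "i \<noteq> 0"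
  shows "((\<lambda>x. neg_loglik h m (\<theta>(i := x))) has_real_derivative
     - (\<Sum>t<m. (if snd (h ! t) = i then 1 else 0)
          - (if i \<in> fst (h ! t) then exp x else 0) / (1 + (\<Sum>j\<in>fst (h ! t). exp ((\<theta>(i := x)) j))))) (at x)"
proof -
  have A: "((\<lambda>x. if snd (h ! t) = 0 then 0 else (\<theta>(i := x)) (snd (h ! t))) has_real_derivative
       (if snd (h ! t) = i then 1 else 0)) (at x)" for t
  proof (cases "snd (h ! t) = i")
    case True
    then have "(\<lambda>x. if snd (h ! t) = 0 then 0 else (\<theta>(i := x)) (snd (h ! t))) = (\<lambda>x. x)"
      using i by auto
    then show ?thesis using True by simp
  next
    case False
    then have "(\<lambda>x. if snd (h ! t) = 0 then 0 else (\<theta>(i := x)) (snd (h ! t)))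
        = (\<lambda>x. if snd (h ! t) = 0 then 0 else \<theta> (snd (h ! t)))"
      by auto
    then show ?thesis using False by simp
  qed
  have E: "((\<lambda>x. \<Sum>j\<in>fst (h ! t). exp ((\<theta>(i := x)) j)) has_real_derivative
       (if i \<in> fst (h ! t) then exp x else 0)) (at x)" if t: "t < m" for t
  proof -
    have "((\<lambda>x. \<Sum>j\<in>fst (h ! t). exp ((\<theta>(i := x)) j)) has_real_derivative
       (\<Sum>j\<in>fst (h ! t). if j = i then exp x else 0)) (at x)"
    proof (rule DERIV_sum)
      fix j
      show "((\<lambda>x. exp ((\<theta>(i := x)) j)) has_real_derivative (if j = i then exp x else 0)) (at x)"
      proof (cases "j = i")
        case True
        then show ?thesis by (simp add: DERIV_exp)
      next
        case False
        then show ?thesis by simp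
      qed
    qed
    moreover have "(\<Sum>j\<in>fst (h ! t). if j = i then exp x else 0) = (if i \<in> fst (h ! t) then exp x else 0)"
      using fin[OF t] by (simp add: sum.delta')
    ultimately show ?thesis by simp
  qed
  have L: "((\<lambda>x. ln (1 + (\<Sum>j\<in>fst (h ! t). exp ((\<theta>(i := x)) j)))) has_real_derivative
       (if i \<in> fst (h ! t) then exp x else 0) / (1 + (\<Sum>j\<in>fst (h ! t). exp ((\<theta>(i := x)) j)))) (at x)"
    if t: "t < m" for t
  proof -
    have pos: "0 < 1 + (\<Sum>j\<in>fst (h ! t). exp ((\<theta>(i := x)) j))"
      by (intro add_pos_nonneg sum_nonneg) auto
    have E1: "((\<lambda>x. 1 + (\<Sum>j\<in>fst (h ! t). exp ((\<theta>(i := x)) j))) has_real_derivative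
       0 + (if i \<in> fst (h ! t) then exp x else 0)) (at x)"
      by (rule DERIV_add[OF DERIV_const E[OF t]])
    show ?thesis
      using DERIV_chain2[OF DERIV_ln_divide[OF pos] E1] by (simp add: divide_inverse mult.commute)
  qed
  have "((\<lambda>x. \<Sum>t<m. (if snd (h ! t) = 0 then 0 else (\<theta>(i := x)) (snd (h ! t)))
         - ln (1 + (\<Sum>j\<in>fst (h ! t). exp ((\<theta>(i := x)) j)))) has_real_derivative
     (\<Sum>t<m. (if snd (h ! t) = i then 1 else 0)
          - (if i \<in> fst (h ! t) then exp x else 0) / (1 + (\<Sum>j\<in>fst (h ! t). exp ((\<theta>(i := x)) j))))) (at x)"
    by (rule DERIV_sum, rule DERIV_diff[OF A L]) auto
  then show ?thesis
    unfolding neg_loglik_def by (rule DERIV_minus)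
qed

definition supp :: "nat \<Rightarrow> nat \<Rightarrow> history \<Rightarrow> bool" where
  "supp N T h \<longleftrightarrow> length h = T \<and>
     (\<forall>s<T. fst (h ! s) \<subseteq> {1..N} \<and> (snd (h ! s) = 0 \<or> snd (h ! s) \<in> fst (h ! s)))"

lemma grad_eq:
  assumes sp: "supp N T h" and m: "m \<le> T" and i: "i \<in> {1..N}"
    and vpos: "\<And>j. j \<in> {1..N} \<Longrightarrow> v j > 0"
  shows "grad_i h m i (\<lambda>j. ln (v j)) = - Msum v i m h"
proof -
  define \<theta> where "\<theta> = (\<lambda>j. ln (v j))"
  have fin: "\<And>t. t < m \<Longrightarrow> finite (fst (h ! t))"
    using sp m unfolding supp_def by (meson finite_atLeastAtMost finite_subset less_le_trans)
  have i0: "i \<noteq> 0" using i by auto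
  have "grad_i h m i \<theta> = - (\<Sum>t<m. (if snd (h ! t) = i then 1 else 0)
          - (if i \<in> fst (h ! t) then exp (\<theta> i) else 0) / (1 + (\<Sum>j\<in>fst (h ! t). exp ((\<theta>(i := \<theta> i)) j))))"
    unfolding grad_i_def by (rule DERIV_imp_deriv[OF nll_deriv[OF fin i0]])
  also have "\<dots> = - (\<Sum>t<m. zf v i (h ! t))"
  proof -
    have "(if snd (h ! t) = i then 1 else 0)
          - (if i \<in> fst (h ! t) then exp (\<theta> i) else 0) / (1 + (\<Sum>j\<in>fst (h ! t). exp ((\<theta>(i := \<theta> i)) j)))
        = zf v i (h ! t)" if t: "t < m" for t
    proof -
      have sub: "fst (h ! t) \<subseteq> {1..N}" using sp m t unfolding supp_def by auto
      have "(\<Sum>j\<in>fst (h ! t). exp ((\<theta>(i := \<theta> i)) j)) = (\<Sum>j\<in>fst (h ! t). v j)"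
        using sub vpos by (intro sum.cong) (auto simp: \<theta>_def)
      moreover have "exp (\<theta> i) = v i" using vpos i by (simp add: \<theta>_def)
      ultimately show ?thesis using i0 by (simp add: zf_def mnl_prob_def)
    qed
    then show ?thesis by simp
  qed
  also have "\<dots> = - Msum v i m h"
    using sp m unfolding Msum_def supp_def by (simp add: min_def)
  finally show ?thesis by (simp add: \<theta>_def)
qed

lemma count_eq:
  assumes sp: "supp N T h" and m: "m \<le> T"
  shows "real (n_count h m i) = Ksum i m h"
proof -
  have "Ksum i m h = (\<Sum>s<m. kf i (h ! s))"
    using sp m unfolding Ksum_def supp_def by (simp add: min_def)
  also have "\<dots> = (\<Sum>s\<in>{s\<in>{..<m}. i \<in> fst (h ! s)}. 1)"
    using sum.inter_filter[of "{..<m}" "\<lambda>_. (1::real)" "\<lambda>s. i \<in> fst (h ! s)"] by (simp add: kf_def)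
  also have "\<dots> = real (card {s\<in>{..<m}. i \<in> fst (h ! s)})" by simp
  also have "{s\<in>{..<m}. i \<in> fst (h ! s)} = {t. t < m \<and> i \<in> fst (h ! t)}" by auto
  finally show ?thesis by (simp add: n_count_def)
qed

lemma count_le:
  "n_count h m i \<le> m"
proof -
  have "n_count h m i \<le> card {..<m}"
    unfolding n_count_def by (intro card_mono) auto
  then show ?thesis by simp
qed

lemma Msum_zero:
  assumes sp: "supp N T h" and m: "m \<le> T" and i: "i \<in> {1..N}" and n0: "n_count h m i = 0"
  shows "Msum v i m h = 0"
proof -
  have fin: "finite {t. t < m \<and> i \<in> fst (h ! t)}" by auto
  then have empty: "{t. t < m \<and> i \<in> fst (h ! t)} = {}" using n0 by (simp add: n_count_def)
  have "Msum v i m h = (\<Sum>s<m. zf v i (h ! s))"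
    using sp m unfolding Msum_def supp_def by (simp add: min_def)
  also have "\<dots> = 0"
  proof (intro sum.neutral ballI)
    fix s assume s: "s \<in> {..<m}"
    then have ni: "i \<notin> fst (h ! s)" using empty by auto
    have "snd (h ! s) = 0 \<or> snd (h ! s) \<in> fst (h ! s)" using sp m s unfolding supp_def by auto
    then have "snd (h ! s) \<noteq> i" using ni i by auto
    then show "zf v i (h ! s) = 0" using ni i by (auto simp: zf_def mnl_prob_def)
  qed
  finally show ?thesis .
qed

lemma key_ineq:
  fixes M c :: real and n :: nat
  assumes n: "n \<ge> 1" and c: "c > 0" and bad: "\<not> \<bar>M\<bar> \<le> sqrt (2 * real n * c)"
  defines "lam \<equiv> (if M \<ge> 0 then 1 else -1) * sqrt (2 * c / real n)"
  shows "c \<le> lam * M - lam\<^sup>2 / 2 * real n"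
proof -
  have np: "real n > 0" using n by simp
  have l2: "lam\<^sup>2 = 2 * c / real n"
    unfolding lam_def using c np by (simp add: power_mult_distrib)
  have lM: "lam * M = sqrt (2 * c / real n) * \<bar>M\<bar>"
    unfolding lam_def by auto
  have "sqrt (2 * c / real n) * sqrt (2 * real n * c) = 2 * c"
  proof -
    have "sqrt (2 * c / real n) * sqrt (2 * real n * c) = sqrt ((2 * c) ^ 2)"
      using np by (simp add: real_sqrt_mult[symmetric] power2_eq_square field_simps)
    also have "\<dots> = 2 * c" using c real_sqrt_abs[of "2 * c"] by simp
    finally show ?thesis .
  qed
  moreover have "sqrt (2 * c / real n) * sqrt (2 * real n * c) \<le> sqrt (2 * c / real n) * \<bar>M\<bar>"
    using bad c np by (intro mult_left_mono) auto
  ultimately have "2 * c \<le> lam * M" using lM by simp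
  moreover have "lam\<^sup>2 / 2 * real n = c" using l2 np by simp
  ultimately show ?thesis by simp
qed

lemma tail:
  assumes pol: "\<And>h. set_pmf (pol h) \<subseteq> Pow {1..N}"
    and vpos: "\<And>j. j \<in> {1..N} \<Longrightarrow> v j > 0" and i: "i \<in> {1..N}"
    and m: "m \<le> T" and c: "c > 0"
  shows "measure_pmf.prob (hist pol v T) {h. \<not> \<bar>Msum v i m h\<bar> \<le> sqrt (2 * Ksum i m h * c)}
          \<le> 2 * real m * exp (- c)"
proof -
  define B where "B = (\<lambda>p::nat \<times> real. {h. exp c \<le> Fexp (snd p * sqrt (2 * c / real (fst p))) v i m h})"
  define P where "P = {1..m} \<times> {1::real, -1}"
  have i0: "i \<noteq> 0" using i by auto
  have "AE h in measure_pmf (hist pol v T).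
      h \<in> {h. \<not> \<bar>Msum v i m h\<bar> \<le> sqrt (2 * Ksum i m h * c)} \<longrightarrow> h \<in> (\<Union>p\<in>P. B p)"
    unfolding AE_measure_pmf_iff
  proof (intro ballI impI)
    fix h assume h: "h \<in> set_pmf (hist pol v T)"
      and bad0: "h \<in> {h. \<not> \<bar>Msum v i m h\<bar> \<le> sqrt (2 * Ksum i m h * c)}"
    have sp: "supp N T h" using hist_support[OF pol vpos h] unfolding supp_def by blast
    define n where "n = n_count h m i"
    have K: "Ksum i m h = real n" using count_eq[OF sp m] n_def by simp
    have bad: "\<not> \<bar>Msum v i m h\<bar> \<le> sqrt (2 * real n * c)" using bad0 K by (simp add: mult_ac)
    have n1: "n \<ge> 1"
    proof (rule ccontr)
      assume "\<not> n \<ge> 1"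
      then have "n = 0" by simp
      then have "Msum v i m h = 0" using Msum_zero[OF sp m i] n_def by simp
      then show False using bad \<open>n = 0\<close> by simp
    qed
    have nm: "n \<le> m" using count_le n_def by simp
    define sg where "sg = (if Msum v i m h \<ge> 0 then 1 else (-1::real))"
    have "c \<le> (sg * sqrt (2 * c / real n)) * Msum v i m h - (sg * sqrt (2 * c / real n))\<^sup>2 / 2 * real n"
      using key_ineq[OF n1 c bad] unfolding sg_def by simp
    then have "exp c \<le> Fexp (sg * sqrt (2 * c / real n)) v i m h"
      unfolding Fexp_def K by simp
    moreover have "(n, sg) \<in> P" using n1 nm unfolding P_def sg_def by auto
    ultimately show "h \<in> (\<Union>p\<in>P. B p)" unfolding B_def by force
  qed
  then have "measure_pmf.prob (hist pol v T) {h. \<not> \<bar>Msum v i m h\<bar> \<le> sqrt (2 * Ksum i m h * c)}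
      \<le> measure_pmf.prob (hist pol v T) (\<Union>p\<in>P. B p)"
    by (intro measure_pmf.finite_measure_mono_AE) auto
  also have "\<dots> \<le> (\<Sum>p\<in>P. measure_pmf.prob (hist pol v T) (B p))"
    by (intro measure_pmf.finite_measure_subadditive_finite) (auto simp: P_def)
  also have "\<dots> \<le> (\<Sum>p\<in>P. exp (- c))"
  proof (intro sum_mono)
    fix p assume "p \<in> P"
    have "measure_pmf.prob (hist pol v T) (B p) \<le> 1 / exp c"
      unfolding B_def
      by (rule markov_pmf[OF core[OF pol vpos i0]]) (auto simp: Fexp_nonneg)
    then show "measure_pmf.prob (hist pol v T) (B p) \<le> exp (- c)" by (simp add: exp_minus field_simps)
  qed
  also have "\<dots> = 2 * real m * exp (- c)" by (simp add: P_def card_cartesian_product)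
  finally show ?thesis .
qed

lemma union_bound:
  fixes M :: "'a pmf" and A :: "'b \<Rightarrow> 'a set"
  assumes "finite X"
  shows "measure_pmf.prob M (\<Inter>x\<in>X. A x) \<ge> 1 - (\<Sum>x\<in>X. (1 - measure_pmf.prob M (A x)))"
proof -
  have c: "measure_pmf.prob M (- B) = 1 - measure_pmf.prob M B" for B :: "'a set"
    using measure_pmf.prob_compl[of B M] by (simp add: Compl_eq_Diff_UNIV)
  have "measure_pmf.prob M (- (\<Inter>x\<in>X. A x)) = measure_pmf.prob M (\<Union>x\<in>X. - A x)" by simp
  also have "\<dots> \<le> (\<Sum>x\<in>X. measure_pmf.prob M (- A x))"
    by (intro measure_pmf.finite_measure_subadditive_finite assms) auto
  also have "\<dots> = (\<Sum>x\<in>X. (1 - measure_pmf.prob M (A x)))" using c by simp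
  finally show ?thesis using c[of "\<Inter>x\<in>X. A x"] by simp
qed

lemma arith_bound:
  fixes m T q N :: nat and \<delta> :: real
  assumes m: "m \<le> T" and d: "0 < \<delta>" "\<delta> < 1" and q: "q \<ge> 1" and N: "N \<ge> 1"
  shows "2 * real m * exp (- (1 + 2 * ln (2 * sqrt (real T) * real q * real N / \<delta>)))
           \<le> \<delta> / (2 * real q * real N)"
proof (cases "m = 0")
  case True
  then show ?thesis using d by simp
next
  case False
  then have T: "real T \<ge> 1" using m by simp
  define X where "X = 2 * sqrt (real T) * real q * real N / \<delta>"
  have Xp: "X > 0" unfolding X_def using T d q N by simp
  have "exp (2 * ln X) = exp (ln X) * exp (ln X)"
    by (subst mult_2) (rule exp_add)
  also have "\<dots> = X * X" using Xp by simp
  finally have e2: "exp (2 * ln X) = X * X" .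
  have "exp (- (1 + 2 * ln X)) = exp (-1) * exp (- (2 * ln X))"
    by (simp add: exp_add[symmetric])
  also have "exp (- (2 * ln X)) = inverse (X * X)" by (simp add: exp_minus e2)
  finally have ex: "exp (- (1 + 2 * ln X)) = exp (-1) / (X * X)"
    by (simp add: divide_inverse)
  have X2: "X * X = 4 * real T * (real q * real q) * (real N * real N) / (\<delta> * \<delta>)"
    unfolding X_def using T by (simp add: field_simps)
  have e: "exp (- (1 + 2 * ln X)) = exp (-1) * (\<delta> * \<delta>) / (4 * real T * (real q * real q) * (real N * real N))"
    unfolding ex X2 using d by simp
  have "2 * real m * exp (- (1 + 2 * ln X)) \<le> 2 * real T * exp (- (1 + 2 * ln X))"
    using m by (intro mult_right_mono) auto
  also have "\<dots> = exp (-1) * \<delta> * (\<delta> / (2 * real q * real N)) / (real q * real N)"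
    unfolding e using T q N d by (simp add: field_simps)
  also have "\<dots> \<le> 1 * 1 * (\<delta> / (2 * real q * real N)) / 1"
  proof -
    have "exp (-1::real) \<le> 1" by simp
    have "exp (-1) * \<delta> \<le> 1 * 1" using d by (intro mult_mono) auto
    then have "exp (-1) * \<delta> * (\<delta> / (2 * real q * real N)) \<le> 1 * 1 * (\<delta> / (2 * real q * real N))"
      using d by (intro mult_right_mono) auto
    moreover have "1 \<le> real q * real N" proof -
      have "1 \<le> q * N" using q N by (simp add: one_le_mult_iff)
      then show ?thesis by (metis of_nat_1 of_nat_le_iff of_nat_mult)
    qed
    ultimately show ?thesis using d q N
      by (intro frac_le) auto
  qed
  finally show ?thesis unfolding X_def by simp
qed

lemma single:
  assumes pol: "\<And>h. set_pmf (pol h) \<subseteq> Pow {1..N}"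
    and vpos: "\<And>j. j \<in> {1..N} \<Longrightarrow> v j > 0" and i: "i \<in> {1..N}" and l: "l \<in> {1..q}"
    and q: "q \<ge> 1" and N: "N \<ge> 1" and tT: "\<tau> \<le> T" and d: "0 < \<delta>" "\<delta> < 1"
  shows "measure_pmf.prob (hist pol v T) (event_A N T \<tau> q \<delta> v i l) \<ge> 1 - \<delta> / (2 * real q * real N)"
proof -
  define m where "m = epoch_end T \<tau> q (l - 1)"
  define c where "c = 1 + 2 * ln (2 * sqrt (real T) * real q * real N / \<delta>)"
  have m: "m \<le> T"
  proof -
    have "(l - 1) * ((T - \<tau>) div q) \<le> q * ((T - \<tau>) div q)" using l by (intro mult_right_mono) auto
    also have "\<dots> \<le> T - \<tau>" by (metis mult.commute div_times_less_eq_dividend)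
    finally show ?thesis unfolding m_def epoch_end_def using tT by simp
  qed
  have lnpos: "0 \<le> ln (2 * sqrt (real T) * real q * real N / \<delta>)"
  proof (cases "T = 0")
    case True then show ?thesis by simp
  next
    case False
    then have "1 \<le> sqrt (real T)" by simp
    moreover have "1 \<le> real q" "1 \<le> real N" using q N by auto
    ultimately have "1 \<le> sqrt (real T) * real q * real N"
      by (metis mult_mono' mult_1 order_trans zero_le_one mult_le_cancel_left1 dual_order.trans less_le_not_le linorder_not_less)
    then have "1 \<le> 2 * sqrt (real T) * real q * real N / \<delta>" using d by (simp add: field_simps)
    then show ?thesis by simp
  qed
  have c: "c > 0" unfolding c_def using lnpos by simp
  have AE: "AE h in measure_pmf (hist pol v T).
      h \<in> - event_A N T \<tau> q \<delta> v i l \<longrightarrow> h \<in> {h. \<not> \<bar>Msum v i m h\<bar> \<le> sqrt (2 * Ksum i m h * c)}"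
    unfolding AE_measure_pmf_iff
  proof (intro ballI impI)
    fix h assume h: "h \<in> set_pmf (hist pol v T)" and nA: "h \<in> - event_A N T \<tau> q \<delta> v i l"
    have sp: "supp N T h" using hist_support[OF pol vpos h] unfolding supp_def by blast
    have g: "grad_i h m i (\<lambda>j. ln (v j)) = - Msum v i m h" by (rule grad_eq[OF sp m i vpos])
    have k: "real (n_count h m i) = Ksum i m h" by (rule count_eq[OF sp m])
    show "h \<in> {h. \<not> \<bar>Msum v i m h\<bar> \<le> sqrt (2 * Ksum i m h * c)}"
      using nA g k unfolding event_A_def m_def[symmetric] c_def[symmetric] by simp
  qed
  have "measure_pmf.prob (hist pol v T) (- event_A N T \<tau> q \<delta> v i l)
      \<le> measure_pmf.prob (hist pol v T) {h. \<not> \<bar>Msum v i m h\<bar> \<le> sqrt (2 * Ksum i m h * c)}"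
    by (intro measure_pmf.finite_measure_mono_AE AE) auto
  also have "\<dots> \<le> 2 * real m * exp (- c)" by (rule tail[OF pol vpos i m c])
  also have "\<dots> \<le> \<delta> / (2 * real q * real N)" unfolding c_def by (rule arith_bound[OF m d q N])
  finally have "measure_pmf.prob (hist pol v T) (- event_A N T \<tau> q \<delta> v i l) \<le> \<delta> / (2 * real q * real N)" .
  moreover have "measure_pmf.prob (hist pol v T) (- event_A N T \<tau> q \<delta> v i l)
      = 1 - measure_pmf.prob (hist pol v T) (event_A N T \<tau> q \<delta> v i l)"
    using measure_pmf.prob_compl[of "event_A N T \<tau> q \<delta> v i l" "hist pol v T"] by (simp add: Compl_eq_Diff_UNIV)
  ultimately show ?thesis by simp
qed

theorem lemma1:
  fixes N K L T \<tau> :: nat and \<delta> R :: real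
    and v :: "nat \<Rightarrow> real" and pol :: "history \<Rightarrow> nat set pmf"
  defines "q \<equiv> (L - N) div (K + 1)"
  assumes "N \<ge> 1" and "N dvd \<tau>" and "\<tau> \<le> T"
    and "0 < \<delta>" and "\<delta> < 1"
    and "q \<ge> 1"
    and "R > 0" and "\<And>i. i \<in> {1..N} \<Longrightarrow> 1 / R \<le> v i \<and> v i \<le> R"
    and "\<And>h. set_pmf (pol h) \<subseteq> Pow {1..N}"
  shows "(\<forall>i\<in>{1..N}. \<forall>l\<in>{1..q}.
            measure_pmf.prob (hist pol v T) (event_A N T \<tau> q \<delta> v i l)
              \<ge> 1 - \<delta> / (2 * real q * real N))
       \<and> (\<forall>l\<in>{1..q}.
            measure_pmf.prob (hist pol v T) (\<Inter>i\<in>{1..N}. event_A N T \<tau> q \<delta> v i l)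
              \<ge> 1 - \<delta> / (2 * real q))
       \<and> measure_pmf.prob (hist pol v T) (\<Inter>i\<in>{1..N}. \<Inter>l\<in>{1..q}. event_A N T \<tau> q \<delta> v i l)
              \<ge> 1 - \<delta> / 2"
proof -
  have vpos: "\<And>j. j \<in> {1..N} \<Longrightarrow> v j > 0"
  proof -
    fix j assume "j \<in> {1..N}"
    then have "1 / R \<le> v j" using assms(9) by blast
    moreover have "0 < 1 / R" using assms(8) by simp
    ultimately show "v j > 0" by linarith
  qed
  have S: "\<And>i l. i \<in> {1..N} \<Longrightarrow> l \<in> {1..q} \<Longrightarrow>
     measure_pmf.prob (hist pol v T) (event_A N T \<tau> q \<delta> v i l) \<ge> 1 - \<delta> / (2 * real q * real N)"
    by (rule single[OF assms(10) vpos]) (use assms in auto)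
  have qN: "real q \<ge> 1" "real N \<ge> 1" using assms by auto
  have P2: "measure_pmf.prob (hist pol v T) (\<Inter>i\<in>{1..N}. event_A N T \<tau> q \<delta> v i l) \<ge> 1 - \<delta> / (2 * real q)"
    if l: "l \<in> {1..q}" for l
  proof -
    have "1 - \<delta> / (2 * real q) = 1 - (\<Sum>i\<in>{1..N}. \<delta> / (2 * real q * real N))"
      using qN by simp
    also have "\<dots> \<le> 1 - (\<Sum>i\<in>{1..N}. (1 - measure_pmf.prob (hist pol v T) (event_A N T \<tau> q \<delta> v i l)))"
      using S[OF _ l] by (intro diff_left_mono sum_mono) (auto simp: algebra_simps)
    also have "\<dots> \<le> measure_pmf.prob (hist pol v T) (\<Inter>i\<in>{1..N}. event_A N T \<tau> q \<delta> v i l)"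
      by (rule union_bound) simp
    finally show ?thesis .
  qed
  have P3i: "measure_pmf.prob (hist pol v T) (\<Inter>l\<in>{1..q}. event_A N T \<tau> q \<delta> v i l) \<ge> 1 - \<delta> / (2 * real N)"
    if i: "i \<in> {1..N}" for i
  proof -
    have "1 - \<delta> / (2 * real N) = 1 - (\<Sum>l\<in>{1..q}. \<delta> / (2 * real q * real N))"
      using qN by simp
    also have "\<dots> \<le> 1 - (\<Sum>l\<in>{1..q}. (1 - measure_pmf.prob (hist pol v T) (event_A N T \<tau> q \<delta> v i l)))"
      using S[OF i] by (intro diff_left_mono sum_mono) (auto simp: algebra_simps)
    also have "\<dots> \<le> measure_pmf.prob (hist pol v T) (\<Inter>l\<in>{1..q}. event_A N T \<tau> q \<delta> v i l)"
      by (rule union_bound) simp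
    finally show ?thesis .
  qed
  have P3: "measure_pmf.prob (hist pol v T) (\<Inter>i\<in>{1..N}. \<Inter>l\<in>{1..q}. event_A N T \<tau> q \<delta> v i l) \<ge> 1 - \<delta> / 2"
  proof -
    have "1 - \<delta> / 2 = 1 - (\<Sum>i\<in>{1..N}. \<delta> / (2 * real N))"
      using qN by simp
    also have "\<dots> \<le> 1 - (\<Sum>i\<in>{1..N}. (1 - measure_pmf.prob (hist pol v T) (\<Inter>l\<in>{1..q}. event_A N T \<tau> q \<delta> v i l)))"
      using P3i by (intro diff_left_mono sum_mono) (auto simp: algebra_simps)
    also have "\<dots> \<le> measure_pmf.prob (hist pol v T) (\<Inter>i\<in>{1..N}. \<Inter>l\<in>{1..q}. event_A N T \<tau> q \<delta> v i l)"
      by (rule union_bound) simp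
    finally show ?thesis .
  qed
  show ?thesis using S P2 P3 by blast
qed

end
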